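(* Let $R$ be a commutative ring with identity and $M$ a non-zero comultiplication $R$-module. Then $M$ is uniform if and only if $M$ is cocyclic.
   Context: An $R$-module $M$ is a comultiplication module if for every submodule $N$ of $M$ there is an ideal $I$ of $R$ with $N=\mathrm{Ann}_M(I)$. $M$ is uniform if any two non-zero submodules of $M$ have non-zero intersection. $\mathrm{Soc}(M)$ is the sum of all minimal submodules of $M$; $M$ is cocyclic if $\mathrm{Soc}(M)$ is a simple submodule of $M$ that is large in $M$ (a submodule $N$ is large if $N\cap L\neq0$ for every non-zero submodule $L$). *)

theory Defs
  imports "HOL-Algebra.Module" "HOL-Algebra.Ideal"
begin

definition annM :: "('a, 'c) ring_scheme \<Rightarrow> ('a, 'b, 'd) module_scheme \<Rightarrow> 'a set \<Rightarrow> 'b set" where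
  "annM R M I = {x \<in> carrier M. \<forall>a\<in>I. a \<odot>\<^bsub>M\<^esub> x = \<zero>\<^bsub>M\<^esub>}"

definition comultiplication_module :: "('a, 'c) ring_scheme \<Rightarrow> ('a, 'b, 'd) module_scheme \<Rightarrow> bool" where
  "comultiplication_module R M \<longleftrightarrow>
     (\<forall>N. submodule N R M \<longrightarrow> (\<exists>I. ideal I R \<and> N = annM R M I))"

definition uniform_module :: "('a, 'c) ring_scheme \<Rightarrow> ('a, 'b, 'd) module_scheme \<Rightarrow> bool" where
  "uniform_module R M \<longleftrightarrow>
     (\<forall>N L. submodule N R M \<and> submodule L R M \<and> N \<noteq> {\<zero>\<^bsub>M\<^esub>} \<and> L \<noteq> {\<zero>\<^bsub>M\<^esub>}
        \<longrightarrow> N \<inter> L \<noteq> {\<zero>\<^bsub>M\<^esub>})"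

definition minimal_submodule :: "('a, 'c) ring_scheme \<Rightarrow> ('a, 'b, 'd) module_scheme \<Rightarrow> 'b set \<Rightarrow> bool" where
  "minimal_submodule R M N \<longleftrightarrow>
     submodule N R M \<and> N \<noteq> {\<zero>\<^bsub>M\<^esub>} \<and>
     (\<forall>L. submodule L R M \<and> L \<subseteq> N \<longrightarrow> L = {\<zero>\<^bsub>M\<^esub>} \<or> L = N)"

text \<open>Socle: the sum of all minimal submodules, i.e. the smallest submodule containing
  all of them (equal to {0} if there are none).\<close>
definition socle :: "('a, 'c) ring_scheme \<Rightarrow> ('a, 'b, 'd) module_scheme \<Rightarrow> 'b set" where
  "socle R M = \<Inter>{L. submodule L R M \<and> (\<forall>N. minimal_submodule R M N \<longrightarrow> N \<subseteq> L)}"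

definition large_submodule :: "('a, 'c) ring_scheme \<Rightarrow> ('a, 'b, 'd) module_scheme \<Rightarrow> 'b set \<Rightarrow> bool" where
  "large_submodule R M N \<longleftrightarrow>
     submodule N R M \<and>
     (\<forall>L. submodule L R M \<and> L \<noteq> {\<zero>\<^bsub>M\<^esub>} \<longrightarrow> N \<inter> L \<noteq> {\<zero>\<^bsub>M\<^esub>})"

definition cocyclic_module :: "('a, 'c) ring_scheme \<Rightarrow> ('a, 'b, 'd) module_scheme \<Rightarrow> bool" where
  "cocyclic_module R M \<longleftrightarrow>
     minimal_submodule R M (socle R M) \<and> large_submodule R M (socle R M)"

end

theory Submission
  imports Defs
begin

context module
begin

lemma sub_zero_mem: "submodule N R M \<Longrightarrow> \<zero>\<^bsub>M\<^esub> \<in> N"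
  by (metis submodule_def subgroup.one_closed monoid.select_convs(2))

lemma sub_inter:
  assumes "submodule N R M" "submodule L R M"
  shows "submodule (N \<inter> L) R M"
  using submoduleE[OF assms(1)] submoduleE[OF assms(2)] sub_zero_mem[OF assms(1)] sub_zero_mem[OF assms(2)]
  by (intro submoduleI) auto

lemma sub_zero: "submodule {\<zero>\<^bsub>M\<^esub>} R M"
  by (intro submoduleI) auto

lemma sub_cyc:
  assumes x: "x \<in> carrier M"
  shows "submodule {r \<odot>\<^bsub>M\<^esub> x | r. r \<in> carrier R} R M"
proof (intro submoduleI)
  show "{r \<odot>\<^bsub>M\<^esub> x | r. r \<in> carrier R} \<subseteq> carrier M" using x by auto
  show "\<zero>\<^bsub>M\<^esub> \<in> {r \<odot>\<^bsub>M\<^esub> x | r. r \<in> carrier R}"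
    using x by (auto intro!: exI[of _ \<zero>])
  show "\<ominus>\<^bsub>M\<^esub> a \<in> {r \<odot>\<^bsub>M\<^esub> x | r. r \<in> carrier R}" if hyp: "a \<in> {r \<odot>\<^bsub>M\<^esub> x | r. r \<in> carrier R}" for a
  proof -
    obtain r where "r \<in> carrier R" "a = r \<odot>\<^bsub>M\<^esub> x" using hyp by auto
    then have "\<ominus>\<^bsub>M\<^esub> a = (\<ominus> r) \<odot>\<^bsub>M\<^esub> x" "\<ominus> r \<in> carrier R" using x by (auto simp: smult_l_minus)
    then show ?thesis by blast
  qed
  show "a \<oplus>\<^bsub>M\<^esub> b \<in> {r \<odot>\<^bsub>M\<^esub> x | r. r \<in> carrier R}" if hyp: "a \<in> {r \<odot>\<^bsub>M\<^esub> x | r. r \<in> carrier R}"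
    "b \<in> {r \<odot>\<^bsub>M\<^esub> x | r. r \<in> carrier R}" for a b
  proof -
    obtain r r' where "r \<in> carrier R" "a = r \<odot>\<^bsub>M\<^esub> x" "r' \<in> carrier R" "b = r' \<odot>\<^bsub>M\<^esub> x" using hyp by auto
    then have "a \<oplus>\<^bsub>M\<^esub> b = (r \<oplus> r') \<odot>\<^bsub>M\<^esub> x" "r \<oplus> r' \<in> carrier R" using x by (auto simp: smult_l_distr)
    then show ?thesis by blast
  qed
  show "a \<odot>\<^bsub>M\<^esub> b \<in> {r \<odot>\<^bsub>M\<^esub> x | r. r \<in> carrier R}" if hyp: "a \<in> carrier R"
    "b \<in> {r \<odot>\<^bsub>M\<^esub> x | r. r \<in> carrier R}" for a b
  proof -
    obtain r where "r \<in> carrier R" "b = r \<odot>\<^bsub>M\<^esub> x" using hyp(2) by auto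
    then have "a \<odot>\<^bsub>M\<^esub> b = (a \<otimes> r) \<odot>\<^bsub>M\<^esub> x" "a \<otimes> r \<in> carrier R" using x hyp(1) by (auto simp: smult_assoc1)
    then show ?thesis by blast
  qed
qed

lemma sub_sum:
  assumes K: "submodule K R M" and w: "w \<in> carrier M"
  shows "submodule {k \<oplus>\<^bsub>M\<^esub> r \<odot>\<^bsub>M\<^esub> w | k r. k \<in> K \<and> r \<in> carrier R} R M"
    (is "submodule ?S R M")
proof (intro submoduleI)
  note KE = submoduleE[OF K]
  show "?S \<subseteq> carrier M" using KE(1) w by auto
  show "\<zero>\<^bsub>M\<^esub> \<in> ?S"
    using w sub_zero_mem[OF K] by (auto intro!: exI[of _ "\<zero>\<^bsub>M\<^esub>"] exI[of _ \<zero>])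
  show "\<ominus>\<^bsub>M\<^esub> a \<in> ?S" if hyp: "a \<in> ?S" for a
  proof -
    obtain k r where a: "a = k \<oplus>\<^bsub>M\<^esub> r \<odot>\<^bsub>M\<^esub> w" "k \<in> K" "r \<in> carrier R" using hyp by auto
    have kc: "k \<in> carrier M" using a KE(1) by auto
    have "\<ominus>\<^bsub>M\<^esub> a = \<ominus>\<^bsub>M\<^esub> k \<oplus>\<^bsub>M\<^esub> (\<ominus> r) \<odot>\<^bsub>M\<^esub> w"
      using a kc w by (simp add: smult_l_minus M.minus_add)
    then show ?thesis using a KE(3) by blast
  qed
  show "a \<oplus>\<^bsub>M\<^esub> b \<in> ?S" if hyp: "a \<in> ?S" "b \<in> ?S" for a b
  proof -
    obtain k r where a: "a = k \<oplus>\<^bsub>M\<^esub> r \<odot>\<^bsub>M\<^esub> w" "k \<in> K" "r \<in> carrier R" using hyp by auto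
    obtain k' r' where b: "b = k' \<oplus>\<^bsub>M\<^esub> r' \<odot>\<^bsub>M\<^esub> w" "k' \<in> K" "r' \<in> carrier R" using hyp by auto
    have kc: "k \<in> carrier M" "k' \<in> carrier M" using a b KE(1) by auto
    have "a \<oplus>\<^bsub>M\<^esub> b = (k \<oplus>\<^bsub>M\<^esub> k') \<oplus>\<^bsub>M\<^esub> (r \<oplus> r') \<odot>\<^bsub>M\<^esub> w"
      using a b kc w by (simp add: smult_l_distr M.a_ac)
    then show ?thesis using a b KE(5) by blast
  qed
  show "c \<odot>\<^bsub>M\<^esub> a \<in> ?S" if hyp: "c \<in> carrier R" "a \<in> ?S" for c a
  proof -
    obtain k r where a: "a = k \<oplus>\<^bsub>M\<^esub> r \<odot>\<^bsub>M\<^esub> w" "k \<in> K" "r \<in> carrier R" using hyp by auto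
    have kc: "k \<in> carrier M" using a KE(1) by auto
    have "c \<odot>\<^bsub>M\<^esub> a = c \<odot>\<^bsub>M\<^esub> k \<oplus>\<^bsub>M\<^esub> (c \<otimes> r) \<odot>\<^bsub>M\<^esub> w"
      using a kc w hyp by (simp add: smult_r_distr smult_assoc1)
    then show ?thesis using a KE(4) hyp by blast
  qed
qed

lemma sub_chain_union:
  assumes "C \<noteq> {}" "\<And>K. K \<in> C \<Longrightarrow> submodule K R M"
    and ch: "\<And>X Y. X \<in> C \<Longrightarrow> Y \<in> C \<Longrightarrow> X \<subseteq> Y \<or> Y \<subseteq> X"
  shows "submodule (\<Union>C) R M"
proof (intro submoduleI)
  show "\<Union>C \<subseteq> carrier M" using assms(2) submoduleE(1) by blast
  show "\<zero>\<^bsub>M\<^esub> \<in> \<Union>C" using assms(1,2) sub_zero_mem by blast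
  show "\<ominus>\<^bsub>M\<^esub> a \<in> \<Union>C" if "a \<in> \<Union>C" for a
    using that assms(2) submoduleE(3) by blast
  show "c \<odot>\<^bsub>M\<^esub> a \<in> \<Union>C" if "c \<in> carrier R" "a \<in> \<Union>C" for c a
    using that assms(2) submoduleE(4) by blast
  show "a \<oplus>\<^bsub>M\<^esub> b \<in> \<Union>C" if hyp: "a \<in> \<Union>C" "b \<in> \<Union>C" for a b
  proof -
    obtain X Y where "X \<in> C" "Y \<in> C" "a \<in> X" "b \<in> Y" using hyp by auto
    then show ?thesis using ch[of X Y] assms(2) submoduleE(5)
      by (metis UnionI subsetD)
  qed
qed

lemma exists_minimal_cyc:
  assumes co: "comultiplication_module R M" and x: "x \<in> carrier M" "x \<noteq> \<zero>\<^bsub>M\<^esub>"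
  shows "\<exists>S. minimal_submodule R M S \<and> S \<subseteq> {r \<odot>\<^bsub>M\<^esub> x | r. r \<in> carrier R}"
proof -
  define Rx where "Rx = {r \<odot>\<^bsub>M\<^esub> x | r. r \<in> carrier R}"
  define A where "A = {K. submodule K R M \<and> K \<subseteq> Rx \<and> x \<notin> K}"
  have zA: "{\<zero>\<^bsub>M\<^esub>} \<in> A" unfolding A_def Rx_def using sub_zero x
    by (auto intro!: exI[of _ \<zero>])
  have "\<exists>K\<in>A. \<forall>X\<in>A. K \<subseteq> X \<longrightarrow> X = K"
  proof (rule subset_Zorn_nonempty)
    show "A \<noteq> {}" using zA by blast
    show "\<Union>C \<in> A" if "C \<noteq> {}" "subset.chain A C" for C
      using that sub_chain_union[of C] unfolding A_def subset_chain_def by auto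
  qed
  then obtain K where KA: "K \<in> A" and Kmax: "\<And>X. X \<in> A \<Longrightarrow> K \<subseteq> X \<Longrightarrow> X = K" by blast
  have K: "submodule K R M" "K \<subseteq> Rx" "x \<notin> K" using KA unfolding A_def by auto
  obtain J where J: "ideal J R" "K = annM R M J" using co K(1) unfolding comultiplication_module_def by blast
  obtain j where j: "j \<in> J" "j \<odot>\<^bsub>M\<^esub> x \<noteq> \<zero>\<^bsub>M\<^esub>" using K(3) J(2) x unfolding annM_def by auto
  have jc: "j \<in> carrier R" using ideal.Icarr[OF J(1) j(1)] .
  have annK: "\<And>k. k \<in> K \<Longrightarrow> j \<odot>\<^bsub>M\<^esub> k = \<zero>\<^bsub>M\<^esub>"
  proof -
    fix k assume "k \<in> K"
    then have "k \<in> annM R M J" using J(2) by simp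
    then show "j \<odot>\<^bsub>M\<^esub> k = \<zero>\<^bsub>M\<^esub>" using j(1) unfolding annM_def by blast
  qed
  define y where "y = j \<odot>\<^bsub>M\<^esub> x"
  have yc: "y \<in> carrier M" using jc x y_def by auto
  define S where "S = {r \<odot>\<^bsub>M\<^esub> y | r. r \<in> carrier R}"
  have yS: "y \<in> S" unfolding S_def using yc by (auto intro!: exI[of _ \<one>])
  have SRx: "S \<subseteq> Rx"
  proof
    fix a assume "a \<in> S"
    then obtain r where r: "r \<in> carrier R" "a = r \<odot>\<^bsub>M\<^esub> y" unfolding S_def by blast
    then have "a = (r \<otimes> j) \<odot>\<^bsub>M\<^esub> x" "r \<otimes> j \<in> carrier R"
      using jc x by (auto simp: y_def smult_assoc1)
    then show "a \<in> Rx" unfolding Rx_def by blast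
  qed
  have "minimal_submodule R M S"
    unfolding minimal_submodule_def
  proof (intro conjI allI impI)
    show "submodule S R M" unfolding S_def using sub_cyc yc .
    show "S \<noteq> {\<zero>\<^bsub>M\<^esub>}" using yS j(2) y_def by auto
    fix L assume L: "submodule L R M \<and> L \<subseteq> S"
    show "L = {\<zero>\<^bsub>M\<^esub>} \<or> L = S"
    proof (cases "L = {\<zero>\<^bsub>M\<^esub>}")
      case True then show ?thesis by simp
      next
      case False
      then obtain z where z: "z \<in> L" "z \<noteq> \<zero>\<^bsub>M\<^esub>" using sub_zero_mem[of L] L by blast
      obtain r where r: "r \<in> carrier R" "z = r \<odot>\<^bsub>M\<^esub> y" using z L S_def by auto
      define w where "w = r \<odot>\<^bsub>M\<^esub> x"
      have wc: "w \<in> carrier M" using r x w_def by auto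
      have jw: "j \<odot>\<^bsub>M\<^esub> w = z" unfolding w_def r y_def
        using r jc x by (simp add: smult_assoc1[symmetric] R.m_comm)
      have wK: "w \<notin> K" using annK jw z by auto
      define K' where "K' = {k \<oplus>\<^bsub>M\<^esub> s \<odot>\<^bsub>M\<^esub> w | k s. k \<in> K \<and> s \<in> carrier R}"
      have K'sub: "submodule K' R M" unfolding K'_def using sub_sum K(1) wc by blast
      have KK': "K \<subseteq> K'"
      proof
        fix k assume "k \<in> K"
        moreover then have "k = k \<oplus>\<^bsub>M\<^esub> \<zero> \<odot>\<^bsub>M\<^esub> w"
          using wc submoduleE(1)[OF K(1)] by auto
        ultimately show "k \<in> K'" unfolding K'_def by blast
      qed
      have wK': "w \<in> K'" unfolding K'_def using wc sub_zero_mem[OF K(1)]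
        by (auto intro!: exI[of _ "\<zero>\<^bsub>M\<^esub>"] exI[of _ \<one>])
      have K'Rx: "K' \<subseteq> Rx"
      proof
        fix a assume "a \<in> K'"
        then obtain k s where a: "a = k \<oplus>\<^bsub>M\<^esub> s \<odot>\<^bsub>M\<^esub> w" "k \<in> K" "s \<in> carrier R"
          unfolding K'_def by auto
        obtain t where t: "t \<in> carrier R" "k = t \<odot>\<^bsub>M\<^esub> x" using a(2) K(2) Rx_def by auto
        have "a = (t \<oplus> s \<otimes> r) \<odot>\<^bsub>M\<^esub> x"
          using a t r x unfolding w_def by (simp add: smult_l_distr smult_assoc1)
        then show "a \<in> Rx" unfolding Rx_def using t a r by blast
      qed
      have "K' \<notin> A" using Kmax[of K'] KK' wK' wK by blast
      then have "x \<in> K'" using K'sub K'Rx unfolding A_def by blast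
      then obtain k s where xk: "x = k \<oplus>\<^bsub>M\<^esub> s \<odot>\<^bsub>M\<^esub> w" "k \<in> K" "s \<in> carrier R"
        unfolding K'_def by auto
      have kc: "k \<in> carrier M" using xk submoduleE(1)[OF K(1)] by auto
      have "y = j \<odot>\<^bsub>M\<^esub> k \<oplus>\<^bsub>M\<^esub> j \<odot>\<^bsub>M\<^esub> (s \<odot>\<^bsub>M\<^esub> w)"
        unfolding y_def using xk kc wc jc by (simp add: smult_r_distr)
      also have "\<dots> = j \<odot>\<^bsub>M\<^esub> (s \<odot>\<^bsub>M\<^esub> w)" using annK[OF xk(2)] jc xk(3) wc by simp
      also have "\<dots> = (s \<otimes> j) \<odot>\<^bsub>M\<^esub> w" using jc xk(3) wc
        by (simp add: smult_assoc1[symmetric] R.m_comm)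
      also have "\<dots> = s \<odot>\<^bsub>M\<^esub> z" using jc xk(3) wc jw by (simp add: smult_assoc1)
      finally have ysz: "y = s \<odot>\<^bsub>M\<^esub> z" .
      have yL: "y \<in> L" unfolding ysz using L z(1) xk(3) submoduleE(4) by blast
      have "S \<subseteq> L" unfolding S_def using yL L submoduleE(4) by blast
      then show ?thesis using L by blast
    qed
  qed
  then show ?thesis using SRx Rx_def by blast
qed

lemma exists_minimal:
  assumes co: "comultiplication_module R M" and N: "submodule N R M" "N \<noteq> {\<zero>\<^bsub>M\<^esub>}"
  shows "\<exists>S. minimal_submodule R M S \<and> S \<subseteq> N"
proof -
  obtain x where x: "x \<in> N" "x \<noteq> \<zero>\<^bsub>M\<^esub>" using N sub_zero_mem by blast
  have xc: "x \<in> carrier M" using x N submoduleE(1) by blast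
  obtain S where S: "minimal_submodule R M S" "S \<subseteq> {r \<odot>\<^bsub>M\<^esub> x | r. r \<in> carrier R}"
    using exists_minimal_cyc[OF co xc x(2)] by blast
  have "{r \<odot>\<^bsub>M\<^esub> x | r. r \<in> carrier R} \<subseteq> N" using x N submoduleE(4) by blast
  then show ?thesis using S by blast
qed

end

theorem lemma2p5:
  fixes R :: "('a, 'c) ring_scheme" and M :: "('a, 'b, 'd) module_scheme"
  assumes "module R M"
    and "carrier M \<noteq> {\<zero>\<^bsub>M\<^esub>}"
    and "comultiplication_module R M"
  shows "uniform_module R M \<longleftrightarrow> cocyclic_module R M"
proof
  interpret module R M by fact
  assume U: "uniform_module R M"
  obtain S0 where S0: "minimal_submodule R M S0"
    using exists_minimal[OF assms(3) carrier_is_submodule assms(2)] by blast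
  have uniq: "S = S0" if "minimal_submodule R M S" for S
  proof -
    have s: "submodule S R M" "S \<noteq> {\<zero>\<^bsub>M\<^esub>}" "submodule S0 R M" "S0 \<noteq> {\<zero>\<^bsub>M\<^esub>}"
      using that S0 unfolding minimal_submodule_def by auto
    have ne: "S \<inter> S0 \<noteq> {\<zero>\<^bsub>M\<^esub>}" using U s unfolding uniform_module_def by blast
    have i: "submodule (S \<inter> S0) R M" using sub_inter s by blast
    have "S \<inter> S0 = S" using that i ne unfolding minimal_submodule_def by blast
    moreover have "S \<inter> S0 = S0" using S0 i ne unfolding minimal_submodule_def by blast
    ultimately show ?thesis by simp
  qed
  have s0sub: "submodule S0 R M" using S0 unfolding minimal_submodule_def by auto
  have soc: "socle R M = S0"
  proof
    show "socle R M \<subseteq> S0" unfolding socle_def using s0sub uniq by blast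
    show "S0 \<subseteq> socle R M" unfolding socle_def using S0 by blast
  qed
  show "cocyclic_module R M"
    unfolding cocyclic_module_def soc large_submodule_def
  proof (intro conjI allI impI S0 s0sub)
    fix L assume "submodule L R M \<and> L \<noteq> {\<zero>\<^bsub>M\<^esub>}"
    then show "S0 \<inter> L \<noteq> {\<zero>\<^bsub>M\<^esub>}" using U s0sub S0 unfolding uniform_module_def minimal_submodule_def
      by blast
  qed
next
  interpret module R M by fact
  assume C: "cocyclic_module R M"
  let ?S = "socle R M"
  have m: "minimal_submodule R M ?S" and l: "large_submodule R M ?S"
    using C unfolding cocyclic_module_def by auto
  have Ssub: "submodule ?S R M" "?S \<noteq> {\<zero>\<^bsub>M\<^esub>}" using m unfolding minimal_submodule_def by auto
  have incl: "?S \<subseteq> N" if "submodule N R M" "N \<noteq> {\<zero>\<^bsub>M\<^esub>}" for N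
  proof -
    have "?S \<inter> N \<noteq> {\<zero>\<^bsub>M\<^esub>}" using l that unfolding large_submodule_def by blast
    moreover have "submodule (?S \<inter> N) R M" using sub_inter Ssub(1) that(1) by blast
    ultimately have "?S \<inter> N = ?S" using m unfolding minimal_submodule_def by blast
    then show ?thesis by blast
  qed
  show "uniform_module R M" unfolding uniform_module_def
  proof (intro allI impI)
    fix N L assume a: "submodule N R M \<and> submodule L R M \<and> N \<noteq> {\<zero>\<^bsub>M\<^esub>} \<and> L \<noteq> {\<zero>\<^bsub>M\<^esub>}"
    then have "?S \<subseteq> N \<inter> L" using incl by blast
    moreover have "\<zero>\<^bsub>M\<^esub> \<in> ?S" using sub_zero_mem Ssub(1) by blast
    ultimately show "N \<inter> L \<noteq> {\<zero>\<^bsub>M\<^esub>}" using Ssub(2) by blast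
  qed
qed

end
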